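(* For $\boldsymbol\ell\in\{0,\dots,N-1\}^d$ let $$\psi_{\boldsymbol\ell}=\frac1{\sqrt{\|G_{\boldsymbol\ell}\|_1}}\sum_{\mathbf{m}\in\mathbb{Z}^d}G[\mathbf{m}N+\boldsymbol\ell]\,\phi_{\mathbf{m}N+\boldsymbol\ell}.$$ Then $\mathcal{T}_K^{N,d}\psi_{\boldsymbol\ell}=\|G_{\boldsymbol\ell}\|_1\psi_{\boldsymbol\ell}$, $\|\psi_{\boldsymbol\ell}\|_{\mathcal{H}}=1$, $\|\psi_{\boldsymbol\ell}\|=\frac{\|G_{\boldsymbol\ell}\|}{\sqrt{\|G_{\boldsymbol\ell}\|_1}}$, and $\langle\psi_{\boldsymbol\ell},\psi_{\mathbf{k}}\rangle=0$ for $\mathbf{k}\ne\boldsymbol\ell$.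
   Context: Let $\mathbb{T}=[-\pi,\pi)$, $j=\sqrt{-1}$, $\phi_{\mathbf{k}}(\mathbf{x})=e^{j\langle\mathbf{k},\mathbf{x}\rangle}$ for $\mathbf{k}\in\mathbb{Z}^d$, $\mu$ uniform probability measure on $\mathbb{T}^d$, $\langle\cdot,\cdot\rangle$ and $\|\cdot\|$ the $L^2_\mu$ inner product and norm. $K(\mathbf{x},\mathbf{x}')=g(M((\mathbf{x}-\mathbf{x}')\bmod\mathbb{T}^d))$ is a positive definite kernel with RKHS $\mathcal{H}$ (coordinatewise $\theta\bmod\mathbb{T}:=((\theta+\pi)\bmod2\pi)-\pi$), Fourier coefficients $G[\mathbf{k}]=(2\pi)^{-d}\int_{\mathbb{T}^d}g(M\boldsymbol\theta)e^{-j\langle\mathbf{k},\boldsymbol\theta\rangle}d\boldsymbol\theta\ge0$, $\sum G[\mathbf{k}]<\infty$, and $\|f\|_{\mathcal{H}}^2=\sum_{\mathbf{k}}|\langle f,\phi_{\mathbf{k}}\rangle|^2/G[\mathbf{k}]$. For even $N$, grid points $\mathbf{x}_{\mathbf{p}}$, $\mathbf{p}\in\{0,\dots,N-1\}^d$, $(\mathbf{x}_{\mathbf{p}})_i=\frac{2\pi}{N}p_i-\pi$, with invertible kernel matrix. $\mathcal{T}_K^{N,d}f(\mathbf{x})=N^{-d}\sum_{\mathbf{p}}K(\mathbf{x},\mathbf{x}_{\mathbf{p}})f(\mathbf{x}_{\mathbf{p}})$. $\|G_{\boldsymbol\ell}\|_1=\sum_{\mathbf{m}}|G[\mathbf{m}N+\boldsymbol\ell]|$,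 $\|G_{\boldsymbol\ell}\|^2=\sum_{\mathbf{m}}|G[\mathbf{m}N+\boldsymbol\ell]|^2$. *)

theory Defs
  imports "HOL-Analysis.Analysis"
begin

definition tmod :: "real \<Rightarrow> real" where
  "tmod t = (t + pi) - 2 * pi * of_int \<lfloor>(t + pi) / (2 * pi)\<rfloor> - pi"

definition vtmod :: "real^'n \<Rightarrow> real^'n" where
  "vtmod x = (\<chi> i. tmod (x $ i))"

definition torus :: "(real^'n) set" where
  "torus = {x. \<forall>i. - pi \<le> x $ i \<and> x $ i < pi}"

definition phi :: "int^'n \<Rightarrow> real^'n \<Rightarrow> complex" where
  "phi k x = cis (\<Sum>i\<in>UNIV. of_int (k $ i) * x $ i)"

definition kern :: "(real^'n \<Rightarrow> real) \<Rightarrow> real^'n^'n \<Rightarrow> real^'n \<Rightarrow> real^'n \<Rightarrow> real" where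
  "kern g M x x' = g (M *v vtmod (x - x'))"

definition fcoef :: "(real^'n \<Rightarrow> real) \<Rightarrow> real^'n^'n \<Rightarrow> int^'n \<Rightarrow> complex" where
  "fcoef g M k = complex_of_real (1 / (2 * pi) ^ CARD('n)) *
     integral (cbox (\<chi> i. - pi) (\<chi> i. pi))
       (\<lambda>\<theta>. complex_of_real (g (M *v \<theta>)) * cnj (phi k \<theta>))"

definition l2_inner :: "(real^'n \<Rightarrow> complex) \<Rightarrow> (real^'n \<Rightarrow> complex) \<Rightarrow> complex" where
  "l2_inner f h = complex_of_real (1 / (2 * pi) ^ CARD('n)) *
     integral (cbox (\<chi> i. - pi) (\<chi> i. pi)) (\<lambda>x. f x * cnj (h x))"

definition l2_norm :: "(real^'n \<Rightarrow> complex) \<Rightarrow> real" where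
  "l2_norm f = sqrt (Re (l2_inner f f))"

definition rkhs_norm :: "(int^'n \<Rightarrow> complex) \<Rightarrow> (real^'n \<Rightarrow> complex) \<Rightarrow> real" where
  "rkhs_norm G f = sqrt (\<Sum>\<^sub>\<infinity>k. (cmod (l2_inner f (phi k)))\<^sup>2 / Re (G k))"

definition pd_kernel :: "'a set \<Rightarrow> ('a \<Rightarrow> 'a \<Rightarrow> real) \<Rightarrow> bool" where
  "pd_kernel S K \<longleftrightarrow> (\<forall>x\<in>S. \<forall>y\<in>S. K x y = K y x) \<and>
     (\<forall>n (xs :: nat \<Rightarrow> 'a) (c :: nat \<Rightarrow> real). (\<forall>i<n. xs i \<in> S) \<longrightarrow>
        0 \<le> (\<Sum>i<n. \<Sum>j<n. c i * c j * K (xs i) (xs j)))"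

definition grid_idx :: "nat \<Rightarrow> (nat^'n) set" where
  "grid_idx N = {p. \<forall>i. p $ i < N}"

definition grid_pt :: "nat \<Rightarrow> nat^'n \<Rightarrow> real^'n" where
  "grid_pt N p = (\<chi> i. 2 * pi / real N * real (p $ i) - pi)"

definition T_op :: "(real^'n \<Rightarrow> real^'n \<Rightarrow> real) \<Rightarrow> nat \<Rightarrow> (real^'n \<Rightarrow> complex) \<Rightarrow> real^'n \<Rightarrow> complex" where
  "T_op K N f x = complex_of_real (1 / real N ^ CARD('n)) *
     (\<Sum>p\<in>grid_idx N. complex_of_real (K x (grid_pt N p)) * f (grid_pt N p))"

text \<open>Kernel matrix (K(x_p, x_q))_{p,q} on the grid is invertible (square matrix: injective).\<close>
definition grid_kernel_matrix_invertible :: "(real^'n \<Rightarrow> real^'n \<Rightarrow> real) \<Rightarrow> nat \<Rightarrow> bool" where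
  "grid_kernel_matrix_invertible K N \<longleftrightarrow>
     (\<forall>c :: nat^'n \<Rightarrow> real.
        (\<forall>p\<in>grid_idx N. (\<Sum>q\<in>grid_idx N. K (grid_pt N p) (grid_pt N q) * c q) = 0)
        \<longrightarrow> (\<forall>q\<in>grid_idx N. c q = 0))"

definition aliased :: "nat \<Rightarrow> int^'n \<Rightarrow> int^'n \<Rightarrow> int^'n" where
  "aliased N m l = (\<chi> i. m $ i * int N + l $ i)"

definition G_l1 :: "(int^'n \<Rightarrow> complex) \<Rightarrow> nat \<Rightarrow> int^'n \<Rightarrow> real" where
  "G_l1 G N l = (\<Sum>\<^sub>\<infinity>m. cmod (G (aliased N m l)))"

definition G_l2 :: "(int^'n \<Rightarrow> complex) \<Rightarrow> nat \<Rightarrow> int^'n \<Rightarrow> real" where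
  "G_l2 G N l = sqrt (\<Sum>\<^sub>\<infinity>m. (cmod (G (aliased N m l)))\<^sup>2)"

definition psi :: "(int^'n \<Rightarrow> complex) \<Rightarrow> nat \<Rightarrow> int^'n \<Rightarrow> real^'n \<Rightarrow> complex" where
  "psi G N l x = complex_of_real (1 / sqrt (G_l1 G N l)) *
     (\<Sum>\<^sub>\<infinity>m. G (aliased N m l) * phi (aliased N m l) x)"

end

theory Submission
  imports Defs
begin


lemma phi_add: "phi k (x + y) = phi k x * phi k y"
  unfolding phi_def by (simp add: cis_mult sum.distrib distrib_left)

lemma norm_phi[simp]: "norm (phi k x) = 1"
  unfolding phi_def by simp

lemma phi_nz[simp]: "phi k x \<noteq> 0"
  by (metis norm_phi norm_zero zero_neq_one)

lemma cnj_phi_mult: "cnj (phi k x) * phi j x = phi (j - k) x"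
  unfolding phi_def by (simp add: cis_cnj cis_mult sum_subtractf[symmetric] algebra_simps)

lemma phi_mult_cnj: "phi j x * cnj (phi k x) = phi (j - k) x"
  using cnj_phi_mult[of k x j] by (simp add: mult.commute)

lemma continuous_on_phi[continuous_intros]: "continuous_on S (phi k)"
  unfolding phi_def by (intro continuous_intros)

lemma phi_zero[simp]: "phi 0 x = 1"
  unfolding phi_def by simp

lemma phi_axis: "phi d (t *\<^sub>R axis i 1) = cis (of_int (d $ i) * t)"
proof -
  have "(\<Sum>j\<in>UNIV. of_int (d $ j) * (t *\<^sub>R axis i (1::real)) $ j) = of_int (d $ i) * t"
    by (simp add: axis_def if_distrib cong: if_cong)
  then show ?thesis unfolding phi_def by simp
qed

abbreviation "lo \<equiv> (\<chi> i. - pi) :: real^'n"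
abbreviation "hi \<equiv> (\<chi> i. pi) :: real^'n"

lemma split_cart:
  fixes f :: "real^'n \<Rightarrow> complex"
  assumes "f integrable_on cbox a b" "a$i \<le> c" "c \<le> b$i"
  shows "integral (cbox a b) f = integral (cbox a (\<chi> j. if j = i then c else b$j)) f
        + integral (cbox (\<chi> j. if j = i then c else a$j) b) f"
proof -
  have k: "axis i (1::real) \<in> Basis" by simp
  have 1: "cbox a b \<inter> {x. x \<bullet> axis i 1 \<le> c} = cbox a (\<chi> j. if j = i then c else b$j)"
  proof (rule set_eqI)
    fix x :: "real^'n"
    have "(\<forall>j. a$j \<le> x$j \<and> x$j \<le> (if j = i then c else b$j)) \<longleftrightarrow> (\<forall>j. a$j \<le> x$j \<and> x$j \<le> b$j) \<and> x$i \<le> c"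
    proof
      assume H: "\<forall>j. a$j \<le> x$j \<and> x$j \<le> (if j = i then c else b$j)"
      have "a$j \<le> x$j \<and> x$j \<le> b$j" for j using H[rule_format, of j] assms(3) by (cases "j = i") auto
      moreover have "x$i \<le> c" using H[rule_format, of i] by simp
      ultimately show "(\<forall>j. a$j \<le> x$j \<and> x$j \<le> b$j) \<and> x$i \<le> c" by blast
    next
      assume H: "(\<forall>j. a$j \<le> x$j \<and> x$j \<le> b$j) \<and> x$i \<le> c"
      show "\<forall>j. a$j \<le> x$j \<and> x$j \<le> (if j = i then c else b$j)"
      proof
        fix j show "a$j \<le> x$j \<and> x$j \<le> (if j = i then c else b$j)" using H by (cases "j = i") auto
      qed
    qed
    then show "x \<in> cbox a b \<inter> {x. x \<bullet> axis i 1 \<le> c} \<longleftrightarrow> x \<in> cbox a (\<chi> j. if j = i then c else b$j)"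
      unfolding Int_iff mem_Collect_eq mem_box_cart inner_axis vec_lambda_beta real_inner_1_right by blast
  qed
  have 2: "cbox a b \<inter> {x. x \<bullet> axis i 1 \<ge> c} = cbox (\<chi> j. if j = i then c else a$j) b"
  proof (rule set_eqI)
    fix x :: "real^'n"
    have "(\<forall>j. (if j = i then c else a$j) \<le> x$j \<and> x$j \<le> b$j) \<longleftrightarrow> (\<forall>j. a$j \<le> x$j \<and> x$j \<le> b$j) \<and> c \<le> x$i"
    proof
      assume H: "\<forall>j. (if j = i then c else a$j) \<le> x$j \<and> x$j \<le> b$j"
      have "a$j \<le> x$j \<and> x$j \<le> b$j" for j using H[rule_format, of j] assms(2) by (cases "j = i") auto
      moreover have "c \<le> x$i" using H[rule_format, of i] by simp
      ultimately show "(\<forall>j. a$j \<le> x$j \<and> x$j \<le> b$j) \<and> c \<le> x$i" by blast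
    next
      assume H: "(\<forall>j. a$j \<le> x$j \<and> x$j \<le> b$j) \<and> c \<le> x$i"
      show "\<forall>j. (if j = i then c else a$j) \<le> x$j \<and> x$j \<le> b$j"
      proof
        fix j show "(if j = i then c else a$j) \<le> x$j \<and> x$j \<le> b$j" using H by (cases "j = i") auto
      qed
    qed
    then show "x \<in> cbox a b \<inter> {x. x \<bullet> axis i 1 \<ge> c} \<longleftrightarrow> x \<in> cbox (\<chi> j. if j = i then c else a$j) b"
      unfolding Int_iff mem_Collect_eq mem_box_cart inner_axis vec_lambda_beta real_inner_1_right by blast
  qed
  show ?thesis using integral_split[OF assms(1) k, of c] 1 2 by simp
qed

lemma integral_phi_cube:
  fixes d :: "int^'n"
  shows "integral (cbox lo hi) (phi d) = (if d = 0 then of_real ((2*pi) ^ CARD('n)) else 0)"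
proof (cases "d = 0")
  case True
  have "measure lborel (cbox lo (hi::real^'n)) = (2*pi) ^ CARD('n)"
  proof -
    have "(0::real^'n) \<in> cbox lo hi" by (simp add: mem_box_cart)
    then have "cbox lo (hi::real^'n) \<noteq> {}" by blast
    from content_cbox_cart[OF this] show ?thesis by simp
  qed
  moreover have "phi 0 = (\<lambda>_::real^'n. 1)" by (simp add: fun_eq_iff)
  ultimately show ?thesis using True by (simp add: scaleR_conv_of_real)
next
  case False
  then obtain i where di: "d $ i \<noteq> 0" by (metis vec_eq_iff zero_index)
  define h where "h = pi / \<bar>real_of_int (d $ i)\<bar>"
  have habs: "\<bar>real_of_int (d $ i)\<bar> \<ge> 1" using di by linarith
  have h0: "0 < h" using di by (simp add: h_def)
  have hpi: "h \<le> pi" unfolding h_def using habs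
    by (simp add: divide_le_eq pi_gt_zero)
  define v where "v = h *\<^sub>R axis i (1::real)"
  define w where "w = (2*pi) *\<^sub>R axis i (1::real)"
  have pv: "phi d v = -1"
  proof -
    have "real_of_int (d $ i) * h = pi \<or> real_of_int (d $ i) * h = - pi"
      unfolding h_def using di by (cases "d $ i > 0") auto
    moreover have "cis (-pi) = -1" by (simp add: complex_eq_iff)
    ultimately show ?thesis unfolding v_def phi_axis by auto
  qed
  have pw: "phi d w = 1"
  proof -
    have "cis (real_of_int (d $ i) * (2*pi)) = cis (2 * pi * real_of_int (d $ i))"
      by (simp add: mult.commute)
    also have "\<dots> = 1" by (rule cis_multiple_2pi) simp
    finally show ?thesis unfolding w_def phi_axis .
  qed
  have int: "phi d integrable_on cbox a b" for a b :: "real^'n"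
    by (intro integrable_continuous continuous_intros)
  define I where "I = integral (cbox lo hi) (phi d)"
  define b1 :: "real^'n" where "b1 = (\<chi> j. if j = i then - pi + h else pi)"
  define a2 :: "real^'n" where "a2 = (\<chi> j. if j = i then - pi + h else - pi)"
  have I1: "I = integral (cbox lo b1) (phi d) + integral (cbox a2 hi) (phi d)"
    unfolding I_def b1_def a2_def using h0 hpi
    by (subst split_cart[OF int, of _ i "- pi + h"]) (auto intro!: arg_cong2[where f="(+)"] arg_cong2[where f=integral] arg_cong2[where f=cbox] simp: vec_eq_iff)
  have "((phi d \<circ> (+) v) has_integral (- I)) (cbox lo hi)"
  proof -
    have "(phi d \<circ> (+) v) = (\<lambda>x. - phi d x)" by (auto simp: phi_add pv)
    then show ?thesis using integrable_integral[OF int[of lo hi]] unfolding I_def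
      by (simp add: has_integral_neg)
  qed
  then have "(phi d has_integral (- I)) (cbox (lo + v) (hi + v))"
    using has_integral_shift_cbox_iff by blast
  then have J: "- I = integral (cbox (lo + v) (hi + v)) (phi d)" by (simp add: integral_unique)
  have e0: "lo + v = a2" unfolding a2_def v_def by (simp add: vec_eq_iff axis_def)
  have e1: "(\<chi> j. if j = i then pi else (hi + v)$j) = hi" by (simp add: vec_eq_iff v_def axis_def)
  have e2: "(\<chi> j. if j = i then pi else a2$j) = lo + w" by (simp add: vec_eq_iff a2_def w_def axis_def)
  have e3: "hi + v = b1 + w" by (simp add: vec_eq_iff v_def w_def b1_def axis_def)
  have J2: "integral (cbox (lo + v) (hi + v)) (phi d) = integral (cbox a2 hi) (phi d)
       + integral (cbox (lo + w) (b1 + w)) (phi d)"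
  proof -
    have "(lo + v) $ i \<le> pi" "pi \<le> (hi + v) $ i" using h0 hpi by (simp_all add: v_def)
    from split_cart[OF int this] show ?thesis unfolding e1 e2 e3[symmetric] e0 .
  qed
  have "((phi d \<circ> (+) w) has_integral integral (cbox lo b1) (phi d)) (cbox lo b1)"
  proof -
    have "(phi d \<circ> (+) w) = phi d" by (auto simp: phi_add pw)
    then show ?thesis using integrable_integral[OF int[of lo b1]] by simp
  qed
  then have J3: "integral (cbox (lo + w) (b1 + w)) (phi d) = integral (cbox lo b1) (phi d)"
    using has_integral_shift_cbox_iff by (metis integral_unique)
  have "- I = I" using I1 J J2 J3 by simp
  then have "I = 0" by simp
  then show ?thesis using False I_def by simp
qed

lemma l2_inner_phi: "l2_inner (phi k) (phi j :: real^'n \<Rightarrow> complex) = (if k = j then 1 else 0)"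
proof -
  have e: "(\<lambda>x. phi k x * cnj (phi j x)) = phi (k - j)" by (simp add: phi_mult_cnj fun_eq_iff)
  show ?thesis unfolding l2_inner_def e integral_phi_cube by (simp add: field_simps)
qed



instance bcontfun :: (metric_space, banach) banach ..

lemma bounded_linear_eval_bcontfun: "bounded_linear (\<lambda>f::('a::topological_space \<Rightarrow>\<^sub>C 'b::real_normed_vector). apply_bcontfun f x)"
  by (rule bounded_linear_intro[of _ 1]) (auto simp: norm_bounded)

lemma cont_bounded_on_cube:
  fixes h :: "real^'n \<Rightarrow> complex"
  assumes "continuous_on (cbox a b) h"
  obtains B where "B > 0" "\<And>x. x \<in> cbox a b \<Longrightarrow> norm (h x) \<le> B"
proof -
  have "bounded (h ` cbox a b)"
    by (intro compact_imp_bounded compact_continuous_image assms compact_cbox)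
  then show ?thesis using that by (auto simp: bounded_pos)
qed

lemma bounded_linear_l2_inner_bcontfun:
  fixes h :: "real^'n \<Rightarrow> complex"
  assumes h: "continuous_on UNIV h"
  shows "bounded_linear (\<lambda>f::((real^'n) \<Rightarrow>\<^sub>C complex). l2_inner (apply_bcontfun f) h)"
proof -
  let ?C = "cbox lo hi :: (real^'n) set"
  obtain B where B: "B > 0" "\<And>x. x \<in> ?C \<Longrightarrow> norm (h x) \<le> B"
    using cont_bounded_on_cube[of lo hi h] h continuous_on_subset by blast
  have int: "(\<lambda>x. apply_bcontfun f x * cnj (h x)) integrable_on ?C" for f :: "(real^'n) \<Rightarrow>\<^sub>C complex"
    by (intro integrable_continuous continuous_intros continuous_on_subset[OF h]) auto
  define c where "c = complex_of_real (1 / (2 * pi) ^ CARD('n))"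
  show ?thesis
  proof (rule bounded_linear_intro[of _ "norm c * (B * measure lborel ?C)"])
    fix f g :: "(real^'n) \<Rightarrow>\<^sub>C complex"
    show "l2_inner (apply_bcontfun (f + g)) h = l2_inner (apply_bcontfun f) h + l2_inner (apply_bcontfun g) h"
      unfolding l2_inner_def by (simp add: distrib_right integral_add[OF int int] distrib_left)
  next
    fix r and f :: "(real^'n) \<Rightarrow>\<^sub>C complex"
    show "l2_inner (apply_bcontfun (r *\<^sub>R f)) h = r *\<^sub>R l2_inner (apply_bcontfun f) h"
      unfolding l2_inner_def by (simp add: scaleR_conv_of_real mult.assoc mult.left_commute)
  next
    fix f :: "(real^'n) \<Rightarrow>\<^sub>C complex"
    have "norm (integral ?C (\<lambda>x. apply_bcontfun f x * cnj (h x))) \<le> integral ?C (\<lambda>x. norm f * B)"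
    proof (rule integral_norm_bound_integral[OF int])
      show "(\<lambda>x. norm f * B) integrable_on ?C" by (intro integrable_continuous continuous_intros)
      fix x assume "x \<in> ?C"
      then show "norm (apply_bcontfun f x * cnj (h x)) \<le> norm f * B"
        unfolding norm_mult complex_mod_cnj
        by (intro mult_mono norm_bounded B) auto
    qed
    also have "\<dots> = norm f * (B * measure lborel ?C)" by simp
    finally show "norm (l2_inner (apply_bcontfun f) h) \<le> norm f * (norm c * (B * measure lborel ?C))"
      unfolding l2_inner_def c_def[symmetric] norm_mult
      by (metis (no_types, lifting) mult.left_commute mult_left_mono norm_ge_zero)
  qed
qed

lemma series_facts:
  fixes c :: "'i \<Rightarrow> complex" and u :: "'i \<Rightarrow> real^'n \<Rightarrow> complex"
  assumes c: "c summable_on A" and u: "\<And>m x. norm (u m x) \<le> 1" and uc: "\<And>m. continuous_on UNIV (u m)"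
  shows "continuous_on UNIV (\<lambda>x. infsum (\<lambda>m. c m * u m x) A)"
    and "\<And>x. (\<lambda>m. c m * u m x) summable_on A"
    and "\<And>h. continuous_on UNIV h \<Longrightarrow> ((\<lambda>m. c m * l2_inner (u m) h) has_sum
            l2_inner (\<lambda>x. infsum (\<lambda>m. c m * u m x) A) h) A"
proof -
  have inb: "(\<lambda>x. c m * u m x) \<in> bcontfun" for m
    by (rule bcontfun_normI[of _ "norm (c m)"]) (auto intro!: continuous_intros uc simp: norm_mult intro: mult_left_le[OF u])
  define F where "F m = Bcontfun (\<lambda>x. c m * u m x)" for m
  have aF: "apply_bcontfun (F m) = (\<lambda>x. c m * u m x)" for m
    unfolding F_def using inb by (simp add: Bcontfun_inverse)
  have nF: "norm (F m) \<le> norm (c m)" for m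
    by (rule norm_bound) (simp add: aF norm_mult mult_left_le[OF u])
  have "(\<lambda>m. norm (c m)) summable_on A" using c summable_on_iff_abs_summable_on_complex by blast
  then have "(\<lambda>m. norm (F m)) summable_on A"
    by (rule Infinite_Sum.abs_summable_on_comparison_test) (use nF in auto)
  then have "F summable_on A" by (rule abs_summable_summable)
  then obtain B where hB: "(F has_sum B) A" by (auto simp: summable_on_def)
  have ev: "((\<lambda>m. c m * u m x) has_sum apply_bcontfun B x) A" for x
    using has_sum_bounded_linear[OF bounded_linear_eval_bcontfun hB, of x] by (simp add: aF)
  then have eq: "(\<lambda>x. infsum (\<lambda>m. c m * u m x) A) = apply_bcontfun B"
    by (auto intro!: ext infsumI)
  show "continuous_on UNIV (\<lambda>x. infsum (\<lambda>m. c m * u m x) A)" unfolding eq by simp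
  show "(\<lambda>m. c m * u m x) summable_on A" for x using ev by (auto simp: summable_on_def)
  fix h :: "real^'n \<Rightarrow> complex" assume h: "continuous_on UNIV h"
  have "((\<lambda>m. l2_inner (apply_bcontfun (F m)) h) has_sum l2_inner (apply_bcontfun B) h) A"
    by (rule has_sum_bounded_linear[OF bounded_linear_l2_inner_bcontfun[OF h] hB])
  moreover have "l2_inner (apply_bcontfun (F m)) h = c m * l2_inner (u m) h" for m
    unfolding aF l2_inner_def by (simp add: mult.assoc mult.left_commute)
  ultimately show "((\<lambda>m. c m * l2_inner (u m) h) has_sum l2_inner (\<lambda>x. infsum (\<lambda>m. c m * u m x) A) h) A"
    unfolding eq by simp
qed



lemma grid_bij: "bij_betw vec_nth (grid_idx N :: (nat^'n) set) (PiE UNIV (\<lambda>_. {..<N}))"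
proof (rule bij_betw_imageI)
  show "inj_on vec_nth (grid_idx N :: (nat^'n) set)" by (simp add: inj_on_def vec_eq_iff fun_eq_iff)
  show "vec_nth ` (grid_idx N :: (nat^'n) set) = PiE UNIV (\<lambda>_. {..<N})"
  proof
    show "vec_nth ` (grid_idx N :: (nat^'n) set) \<subseteq> PiE UNIV (\<lambda>_. {..<N})"
      by (auto simp: grid_idx_def PiE_iff)
    show "PiE UNIV (\<lambda>_. {..<N}) \<subseteq> vec_nth ` (grid_idx N :: (nat^'n) set)"
    proof
      fix f :: "'n \<Rightarrow> nat" assume "f \<in> PiE UNIV (\<lambda>_. {..<N})"
      then have "vec_lambda f \<in> grid_idx N" "f = vec_nth (vec_lambda f)" by (auto simp: grid_idx_def PiE_iff)
      then show "f \<in> vec_nth ` grid_idx N" by blast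
    qed
  qed
qed

lemma grid_finite: "finite (grid_idx N :: (nat^'n) set)"
  using bij_betw_finite[OF grid_bij] by (simp add: finite_PiE)

lemma grid_card: "card (grid_idx N :: (nat^'n) set) = N ^ CARD('n)"
  using bij_betw_same_card[OF grid_bij] by (simp add: card_PiE)

lemma grid_pt_torus: "p \<in> grid_idx N \<Longrightarrow> grid_pt N p \<in> torus"
proof -
  assume p: "p \<in> grid_idx N"
  show ?thesis unfolding torus_def grid_pt_def
  proof (intro CollectI allI conjI)
    fix i
    have pi: "p $ i < N" using p by (simp add: grid_idx_def)
    then have N: "real N > 0" by simp
    have "2 * pi / real N * real (p $ i) \<ge> 0" by simp
    then show "- pi \<le> (\<chi> i. 2 * pi / real N * real (p $ i) - pi) $ i" by simp
    have "real (p $ i) < real N" using pi by simp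
    then have "2 * pi / real N * real (p $ i) < 2 * pi / real N * real N"
      by (intro mult_strict_left_mono) auto
    then show "(\<chi> i. 2 * pi / real N * real (p $ i) - pi) $ i < pi" using N by simp
  qed
qed

lemma cis_eq_1_int:
  assumes "cis (2 * pi * r) = 1" shows "\<exists>n::int. r = of_int n"
proof -
  have "exp (\<i> * complex_of_real (2 * pi * r)) = 1" using assms by (simp add: cis_conv_exp)
  then obtain n :: int where "2 * pi * r = of_int (2 * n) * pi" unfolding exp_eq_1 by auto
  then have "r = of_int n" by simp
  then show ?thesis by blast
qed

lemma disc_sum_phi:
  assumes N: "even N" "N > 0"
  shows "(\<Sum>p\<in>grid_idx N. phi d (grid_pt N p :: real^'n)) =
         (if \<forall>i. int N dvd d $ i then of_nat N ^ CARD('n) else 0)"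
proof (cases "\<forall>i. int N dvd d $ i")
  case True
  define t where "t i = d $ i div int N" for i
  have dt: "d $ i = int N * t i" for i using True unfolding t_def by simp
  obtain r where r: "N = 2 * r" using N(1) by blast
  have one: "phi d (grid_pt N p) = 1" for p
  proof -
    have "(\<Sum>i\<in>UNIV. of_int (d $ i) * grid_pt N p $ i)
        = 2 * pi * of_int (\<Sum>i\<in>UNIV. t i * int (p $ i) - t i * int r)"
      unfolding of_int_sum sum_distrib_left
    proof (rule sum.cong[OF refl])
      fix i
      show "of_int (d $ i) * grid_pt N p $ i = 2 * pi * of_int (t i * int (p $ i) - t i * int r)"
        using N(2) unfolding grid_pt_def dt r by (simp add: field_simps)
    qed
    then show ?thesis unfolding phi_def by (simp del: of_int_sum)
  qed
  show ?thesis using True by (simp add: one grid_card)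
next
  case False
  then obtain i where ndvd: "\<not> int N dvd d $ i" by blast
  define \<sigma> :: "nat^'n \<Rightarrow> nat^'n" where "\<sigma> p = (\<chi> j. if j = i then (p $ j + 1) mod N else p $ j)" for p
  define \<tau> :: "nat^'n \<Rightarrow> nat^'n" where "\<tau> p = (\<chi> j. if j = i then (p $ j + (N - 1)) mod N else p $ j)" for p
  define \<omega> where "\<omega> = cis (2 * pi * (of_int (d $ i) / real N))"
  have modinv1: "((x + 1) mod N + (N - 1)) mod N = x" if "x < N" for x
  proof (cases "x + 1 < N")
    case True then show ?thesis using that by (simp add: mod_add_left_eq[symmetric])
  next
    case False then have "x + 1 = N" using that by simp
    then show ?thesis using that by simp
  qed
  have modinv2: "((x + (N - 1)) mod N + 1) mod N = x" if "x < N" for x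
  proof (cases "x = 0")
    case True then show ?thesis using N(2) by simp
  next
    case False then have e: "x + (N - 1) = (x - 1) + N" using N(2) by simp
    have "(x - 1 + N) mod N = x - 1" using that by simp
    then have "(x + (N - 1)) mod N = x - 1" unfolding e .
    then show ?thesis using that False by simp
  qed
  have shift: "phi d (grid_pt N (\<sigma> p)) = \<omega> * phi d (grid_pt N p)" if "p \<in> grid_idx N" for p
  proof -
    define s where "s = 2 * pi / real N * (real ((p $ i + 1) mod N) - real (p $ i))"
    have "grid_pt N (\<sigma> p) = s *\<^sub>R axis i 1 + grid_pt N p"
      by (simp add: vec_eq_iff grid_pt_def \<sigma>_def s_def axis_def algebra_simps)
    then have "phi d (grid_pt N (\<sigma> p)) = cis (of_int (d $ i) * s) * phi d (grid_pt N p)"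
      by (simp add: phi_add phi_axis)
    moreover have "cis (of_int (d $ i) * s) = \<omega>"
    proof (cases "p $ i + 1 < N")
      case True
      then have "s = 2 * pi / real N" by (simp add: s_def)
      then show ?thesis by (simp add: \<omega>_def field_simps)
    next
      case False
      then have "p $ i + 1 = N" using that by (simp add: grid_idx_def) (metis Suc_eq_plus1 Suc_lessI)
      then have rN: "real N = real (p $ i) + 1" by (metis of_nat_Suc Suc_eq_plus1 add.commute)
      have "(p $ i + 1) mod N = 0" using \<open>p $ i + 1 = N\<close> by simp
      then have sE: "s = 2 * pi / real N - 2 * pi" using N(2) unfolding s_def rN by (simp add: field_simps)
      have "of_int (d $ i) * s = of_int (d $ i) * (2 * pi / real N - 2 * pi)" unfolding sE ..
      also have "\<dots> = 2 * pi * (of_int (d $ i) / real N) + 2 * pi * of_int (- d $ i)"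
        by (simp add: field_simps)
      finally have eq: "of_int (d $ i) * s = 2 * pi * (of_int (d $ i) / real N) + 2 * pi * of_int (- d $ i)" .
      have c1: "cis (2 * pi * real_of_int (- d $ i)) = 1" by (rule cis_multiple_2pi) simp
      show ?thesis unfolding \<omega>_def eq cis_mult[symmetric] c1 by simp
    qed
    ultimately show ?thesis by simp
  qed
  let ?S = "\<Sum>p\<in>grid_idx N. phi d (grid_pt N p :: real^'n)"
  have "?S = (\<Sum>p\<in>grid_idx N. phi d (grid_pt N (\<sigma> p)))"
  proof (rule sum.reindex_bij_witness[where i = \<sigma> and j = \<tau>])
    fix a :: "nat^'n" assume a: "a \<in> grid_idx N"
    have ai: "a $ i < N" using a by (simp add: grid_idx_def)
    show st: "\<sigma> (\<tau> a) = a" using modinv2[OF ai] by (simp add: \<tau>_def \<sigma>_def vec_eq_iff)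
    show "\<tau> (\<sigma> a) = a" using modinv1[OF ai] by (simp add: \<tau>_def \<sigma>_def vec_eq_iff)
    show "\<sigma> a \<in> grid_idx N" using N(2) a by (simp add: \<sigma>_def grid_idx_def)
    show "\<tau> a \<in> grid_idx N" using N(2) a by (simp add: \<tau>_def grid_idx_def)
    show "phi d (grid_pt N (\<sigma> (\<tau> a))) = phi d (grid_pt N a)" by (simp only: st)
  qed
  also have "\<dots> = \<omega> * ?S" by (simp add: shift sum_distrib_left)
  finally have "(1 - \<omega>) * ?S = 0" by (simp add: algebra_simps)
  moreover have "\<omega> \<noteq> 1"
  proof
    assume "\<omega> = 1"
    then have "cis (2 * pi * (of_int (d $ i) / real N)) = 1" by (simp add: \<omega>_def)
    then obtain n :: int where "of_int (d $ i) / real N = of_int n" using cis_eq_1_int by blast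
    then have "of_int (d $ i) = real_of_int (int N * n)" using N(2) by (simp add: field_simps)
    then have "d $ i = int N * n" by (simp only: of_int_eq_iff)
    then show False using ndvd by simp
  qed
  ultimately have "?S = 0" by simp
  then show ?thesis using False by presburger
qed

lemma disc_orth:
  assumes "even N" "N > 0"
  shows "(\<Sum>p\<in>grid_idx N. cnj (phi k (grid_pt N p :: real^'n)) * phi j (grid_pt N p)) =
         (if \<forall>i. int N dvd (j $ i - k $ i) then of_nat N ^ CARD('n) else 0)"
  unfolding cnj_phi_mult disc_sum_phi[OF assms] by simp



lemma has_sum_finite_sum:
  fixes f :: "'p \<Rightarrow> 'a \<Rightarrow> complex"
  assumes "finite P" "\<And>p. p \<in> P \<Longrightarrow> (f p) summable_on A"
  shows "((\<lambda>k. \<Sum>p\<in>P. f p k) has_sum (\<Sum>p\<in>P. infsum (f p) A)) (A :: 'a set)"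
  using assms
proof (induction P rule: finite_induct)
  case empty then show ?case by simp
next
  case (insert q P)
  have h1: "(f q has_sum infsum (f q) A) A" using insert by simp
  have h2: "((\<lambda>k. \<Sum>p\<in>P. f p k) has_sum (\<Sum>p\<in>P. infsum (f p) A)) A" using insert by simp
  have "((\<lambda>k. f q k + (\<Sum>p\<in>P. f p k)) has_sum (infsum (f q) A + (\<Sum>p\<in>P. infsum (f p) A))) A"
    by (rule has_sum_add[OF h1 h2])
  then show ?case using insert by simp
qed

lemma summable_bounded_mult:
  fixes G w :: "'a \<Rightarrow> complex"
  assumes G: "G summable_on A" and w: "\<And>k. norm (w k) \<le> B"
  shows "(\<lambda>k. G k * w k) summable_on A"
proof -
  have "(\<lambda>k. norm (G k)) summable_on A" using G summable_on_iff_abs_summable_on_complex by blast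
  then have "(\<lambda>k. norm (G k) * B) summable_on A" by (rule summable_on_cmult_left)
  then have "(\<lambda>k. norm (G k * w k)) summable_on A"
  proof (rule Infinite_Sum.abs_summable_on_comparison_test')
    fix k show "norm (G k * w k) \<le> norm (G k) * B"
      using w[of k] norm_ge_zero[of "G k"] by (simp add: norm_mult mult_left_mono)
  qed
  then show ?thesis using summable_on_iff_abs_summable_on_complex by blast
qed

definition congv :: "nat \<Rightarrow> int^'n \<Rightarrow> int^'n \<Rightarrow> bool" where
  "congv N k j \<longleftrightarrow> (\<forall>i. int N dvd (k $ i - j $ i))"

lemma congv_sym: "congv N k j \<longleftrightarrow> congv N j k"
proof -
  have "int N dvd (k $ i - j $ i) \<longleftrightarrow> int N dvd (j $ i - k $ i)" for i
    by (metis dvd_minus_iff minus_diff_eq)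
  then show ?thesis unfolding congv_def by blast
qed

lemma congv_aliased: "congv N k (aliased N m j) \<longleftrightarrow> congv N k j"
proof -
  have "int N dvd (k $ i - (m $ i * int N + j $ i)) \<longleftrightarrow> int N dvd (k $ i - j $ i)" for i
  proof -
    have "k $ i - (m $ i * int N + j $ i) = (k $ i - j $ i) + (- m $ i) * int N" by simp
    then show ?thesis by (metis dvd_add_times_triv_right_iff)
  qed
  then show ?thesis unfolding congv_def aliased_def by simp
qed

lemma class_range:
  assumes "N > 0"
  shows "{k. congv N k j} = range (\<lambda>m. aliased N m j)"
proof
  show "range (\<lambda>m. aliased N m j) \<subseteq> {k. congv N k j}"
  proof
    fix k assume "k \<in> range (\<lambda>m. aliased N m j)"
    then obtain m where k: "k = aliased N m j" by blast
    have "congv N k k" by (simp add: congv_def)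
    then show "k \<in> {k. congv N k j}" using congv_aliased[of N k m j] k by simp
  qed
  show "{k. congv N k j} \<subseteq> range (\<lambda>m. aliased N m j)"
  proof
    fix k assume "k \<in> {k. congv N k j}"
    then have d: "int N dvd (k $ i - j $ i)" for i by (simp add: congv_def)
    define m where "m = (\<chi> i. (k $ i - j $ i) div int N)"
    have "aliased N m j = k"
      unfolding aliased_def m_def vec_eq_iff using d by simp
    then show "k \<in> range (\<lambda>m. aliased N m j)" by (metis rangeI)
  qed
qed

lemma inj_aliased: "N > 0 \<Longrightarrow> inj (\<lambda>m. aliased N m j)"
  unfolding inj_def aliased_def by (simp add: vec_eq_iff)

lemma infsum_class:
  assumes "N > 0"
  shows "infsum (\<lambda>k. if congv N k j then f k else 0) UNIV = infsum (\<lambda>m. f (aliased N m j)) UNIV"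
proof -
  have "infsum (\<lambda>k. if congv N k j then f k else 0) UNIV = infsum f {k. congv N k j}"
    by (rule infsum_cong_neutral) auto
  also have "\<dots> = infsum f (range (\<lambda>m. aliased N m j))" by (simp only: class_range[OF assms])
  also have "\<dots> = infsum (\<lambda>m. f (aliased N m j)) UNIV"
    using infsum_reindex[OF inj_aliased[OF assms]] by (simp add: o_def)
  finally show ?thesis .
qed

lemma summable_class:
  fixes f :: "int^'n \<Rightarrow> complex"
  assumes "N > 0" "f summable_on UNIV"
  shows "(\<lambda>m. f (aliased N m j)) summable_on UNIV"
proof -
  have "f summable_on range (\<lambda>m. aliased N m j)" using assms(2) summable_on_subset_banach by blast
  then have "(f \<circ> (\<lambda>m. aliased N m j)) summable_on UNIV"
    using summable_on_reindex[OF inj_aliased[OF assms(1)]] by blast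
  then show ?thesis by (simp add: comp_def)
qed

lemma congv_small:
  assumes "congv N k l" "\<forall>i. 0 \<le> k $ i \<and> k $ i < int N" "\<forall>i. 0 \<le> l $ i \<and> l $ i < int N"
  shows "k = l"
proof -
  have "k $ i = l $ i" for i
  proof -
    obtain t where t: "k $ i - l $ i = int N * t" using assms(1) unfolding congv_def by (meson dvdE)
    have "\<bar>k $ i - l $ i\<bar> < int N" using assms(2,3) by (smt (verit))
    then have "\<bar>int N * t\<bar> < int N" using t by simp
    then have Nt: "int N * \<bar>t\<bar> < int N * 1" by (simp add: abs_mult)
    have "t = 0"
    proof (rule ccontr)
      assume "t \<noteq> 0"
      then have "1 \<le> \<bar>t\<bar>" by simp
      then have "int N * 1 \<le> int N * \<bar>t\<bar>" by (intro mult_left_mono) auto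
      then show False using Nt by simp
    qed
    then show ?thesis using t by simp
  qed
  then show ?thesis by (simp add: vec_eq_iff)
qed

definition Rc :: "(int^'n \<Rightarrow> complex) \<Rightarrow> nat \<Rightarrow> int^'n \<Rightarrow> real^'n \<Rightarrow> complex" where
  "Rc G N j x = infsum (\<lambda>k. if congv N k j then G k * phi k x else 0) UNIV"

lemma Rc_alias: "Rc G N (aliased N m j) x = Rc G N j x"
  unfolding Rc_def congv_aliased ..

lemma Ksum:
  fixes K :: "real^'n \<Rightarrow> real^'n \<Rightarrow> real" and G :: "int^'n \<Rightarrow> complex"
  assumes G: "G summable_on UNIV"
    and K: "\<forall>x\<in>torus. \<forall>x'\<in>torus. complex_of_real (K x x') = (\<Sum>\<^sub>\<infinity>k. G k * phi k x * cnj (phi k x'))"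
    and N: "even N" "N > 0" and x: "x \<in> torus"
  shows "(\<Sum>p\<in>grid_idx N. complex_of_real (K x (grid_pt N p)) * phi j (grid_pt N p))
       = of_nat N ^ CARD('n) * Rc G N j x"
proof -
  let ?P = "grid_idx N :: (nat^'n) set"
  define T where "T p k = G k * (phi k x * cnj (phi k (grid_pt N p)) * phi j (grid_pt N p))" for p k
  have sT: "T p summable_on UNIV" for p
    unfolding T_def by (rule summable_bounded_mult[OF G, of _ 1]) (simp add: norm_mult)
  have "(\<Sum>p\<in>?P. complex_of_real (K x (grid_pt N p)) * phi j (grid_pt N p))
      = (\<Sum>p\<in>?P. infsum (T p) UNIV)"
  proof (rule sum.cong[OF refl])
    fix p assume p: "p \<in> ?P"
    have "complex_of_real (K x (grid_pt N p)) * phi j (grid_pt N p)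
        = (\<Sum>\<^sub>\<infinity>k. G k * phi k x * cnj (phi k (grid_pt N p))) * phi j (grid_pt N p)"
      using K x grid_pt_torus[OF p] by simp
    also have "\<dots> = infsum (T p) UNIV"
      unfolding T_def infsum_cmult_left'[symmetric] by (simp add: mult.assoc)
    finally show "complex_of_real (K x (grid_pt N p)) * phi j (grid_pt N p) = infsum (T p) UNIV" .
  qed
  also have "\<dots> = infsum (\<lambda>k. \<Sum>p\<in>?P. T p k) UNIV"
  proof -
    have "((\<lambda>k. \<Sum>p\<in>?P. T p k) has_sum (\<Sum>p\<in>?P. infsum (T p) UNIV)) UNIV"
      by (rule has_sum_finite_sum[OF grid_finite sT])
    from sym[OF infsumI[OF this]] show ?thesis .
  qed
  also have "\<dots> = infsum (\<lambda>k. of_nat N ^ CARD('n) * (if congv N k j then G k * phi k x else 0)) UNIV"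
  proof (rule infsum_cong)
    fix k
    have "(\<Sum>p\<in>?P. T p k) = G k * phi k x * (\<Sum>p\<in>?P. cnj (phi k (grid_pt N p)) * phi j (grid_pt N p))"
      unfolding T_def sum_distrib_left by (simp add: mult.assoc)
    also have "\<dots> = G k * phi k x * (if congv N k j then of_nat N ^ CARD('n) else 0)"
      unfolding disc_orth[OF N] using congv_sym[of N k j] by (simp add: congv_def)
    finally show "(\<Sum>p\<in>?P. T p k) = of_nat N ^ CARD('n) * (if congv N k j then G k * phi k x else 0)"
      by simp
  qed
  also have "\<dots> = of_nat N ^ CARD('n) * Rc G N j x"
    unfolding Rc_def by (rule infsum_cmult_right')
  finally show ?thesis .
qed



lemma l2_inner_cnj: "l2_inner f g = cnj (l2_inner g f)"
proof -
  have "cnj (integral (cbox lo hi) (\<lambda>x. g x * cnj (f x))) = integral (cbox lo hi) (\<lambda>x. cnj (g x * cnj (f x)))"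
    by (rule integral_cnj)
  also have "\<dots> = integral (cbox lo hi) (\<lambda>x. f x * cnj (g x))" by (simp add: mult.commute)
  finally show ?thesis unfolding l2_inner_def by simp
qed

lemma l2_inner_scale: "l2_inner (\<lambda>x. a * f x) (\<lambda>x. b * g x) = a * cnj b * l2_inner f g"
  unfolding l2_inner_def
proof -
  have "(\<lambda>x. a * f x * cnj (b * g x)) = (\<lambda>x. (a * cnj b) * (f x * cnj (g x)))"
    by (simp add: fun_eq_iff algebra_simps)
  then show "complex_of_real (1 / (2 * pi) ^ CARD('a)) * integral (cbox lo hi) (\<lambda>x. a * f x * cnj (b * g x)) =
    a * cnj b * (complex_of_real (1 / (2 * pi) ^ CARD('a)) * integral (cbox lo hi) (\<lambda>x. f x * cnj (g x)))"
    by (simp add: mult.assoc mult.left_commute)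
qed

lemma infsum_single_supp:
  fixes f :: "'a \<Rightarrow> complex"
  shows "infsum (\<lambda>k'. if P k' then f k' * (if k' = k then 1 else 0) else 0) UNIV = (if P k then f k else 0)"
proof -
  have "infsum (\<lambda>k'. if P k' then f k' * (if k' = k then 1 else 0) else 0) UNIV
      = infsum (\<lambda>k'. if P k' then f k' * (if k' = k then 1 else 0) else 0) {k}"
    by (rule infsum_cong_neutral) auto
  then show ?thesis by simp
qed

lemma main13:
  fixes K :: "real^'n \<Rightarrow> real^'n \<Rightarrow> real" and G :: "int^'n \<Rightarrow> complex" and N :: nat and l :: "int^'n"
  assumes G_nonneg: "\<forall>k. Im (G k) = 0 \<and> 0 \<le> Re (G k)"
    and G_summable: "G summable_on UNIV"
    and K_rkhs: "\<forall>x\<in>torus. \<forall>x'\<in>torus.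
        complex_of_real (K x x') = (\<Sum>\<^sub>\<infinity>k. G k * phi k x * cnj (phi k x'))"
    and N_even: "even N"
    and inv: "grid_kernel_matrix_invertible K N"
    and l: "\<forall>i. 0 \<le> l $ i \<and> l $ i < int N"
  shows "(\<forall>x\<in>torus. T_op K N (psi G N l) x = complex_of_real (G_l1 G N l) * psi G N l x)
       \<and> rkhs_norm G (psi G N l) = 1
       \<and> l2_norm (psi G N l) = G_l2 G N l / sqrt (G_l1 G N l)
       \<and> (\<forall>k. (\<forall>i. 0 \<le> k $ i \<and> k $ i < int N) \<longrightarrow> k \<noteq> l \<longrightarrow>
             l2_inner (psi G N l) (psi G N k) = 0)"
proof -
  obtain i0 :: 'n where True by blast
  have N0: "N > 0" using l[rule_format, of i0] by simp
  have Gre: "G k = complex_of_real (cmod (G k))" for k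
    using G_nonneg[rule_format, of k] by (simp add: cmod_eq_Re complex_eq_iff)
  have cmodRe: "cmod (G k) = Re (G k)" for k
    using G_nonneg[rule_format, of k] by (simp add: cmod_eq_Re)
  define Ga where "Ga j m = G (aliased N m j)" for j m
  define S where "S j x = infsum (\<lambda>m. Ga j m * phi (aliased N m j) x) UNIV" for j x
  define L1 where "L1 = G_l1 G N l"
  define c where "c = 1 / sqrt L1"
  have psi_eq: "psi G N j = (\<lambda>x. complex_of_real (1 / sqrt (G_l1 G N j)) * S j x)" for j
    unfolding psi_def S_def Ga_def by simp
  have Gas: "Ga j summable_on UNIV" for j
    unfolding Ga_def by (rule summable_class[OF N0 G_summable])
  have ser: "continuous_on UNIV (S j)"
     "\<And>x. (\<lambda>m. Ga j m * phi (aliased N m j) x) summable_on UNIV"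
     "\<And>h. continuous_on UNIV h \<Longrightarrow> ((\<lambda>m. Ga j m * l2_inner (phi (aliased N m j)) h) has_sum l2_inner (S j) h) UNIV"
     for j
    using series_facts[OF Gas[of j], of "\<lambda>m. phi (aliased N m j)"]
    unfolding S_def by (auto simp: continuous_on_phi)
  have RcS: "Rc G N j x = S j x" for j x
    unfolding Rc_def S_def Ga_def by (rule infsum_class[OF N0])
  have L1sum: "((\<lambda>m. cmod (Ga l m)) has_sum L1) UNIV"
  proof -
    have "(\<lambda>m. cmod (Ga l m)) summable_on UNIV"
      using Gas[of l] summable_on_iff_abs_summable_on_complex by blast
    then show ?thesis unfolding L1_def G_l1_def Ga_def by simp
  qed
  have L1c: "infsum (Ga l) UNIV = complex_of_real L1"
  proof -
    have "((\<lambda>m. complex_of_real (cmod (Ga l m))) has_sum complex_of_real L1) UNIV"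
      by (rule has_sum_of_real[OF L1sum])
    moreover have "(\<lambda>m. complex_of_real (cmod (Ga l m))) = Ga l"
      unfolding Ga_def using Gre by (auto simp: fun_eq_iff)
    ultimately show ?thesis by (simp add: infsumI)
  qed
  have L1nn: "L1 \<ge> 0" using L1sum by (simp add: has_sum_nonneg)
  have L1pos: "L1 > 0"
  proof (rule ccontr)
    assume "\<not> L1 > 0"
    then have L10: "L1 = 0" using L1nn by simp
    have z: "Ga l m = 0" for m
    proof -
      have "infsum (\<lambda>m. cmod (Ga l m)) UNIV \<le> 0" using infsumI[OF L1sum] L10 by simp
      moreover have "(\<lambda>m. cmod (Ga l m)) summable_on UNIV" using L1sum by (auto simp: summable_on_def)
      ultimately have "cmod (Ga l m) = 0" by (rule nonneg_infsum_le_0D) auto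
      then show ?thesis by simp
    qed
    have R0: "S l x = 0" for x unfolding S_def z by simp
    define v where "v q = phi l (grid_pt N q :: real^'n)" for q
    have Kv: "(\<Sum>q\<in>grid_idx N. complex_of_real (K (grid_pt N p) (grid_pt N q)) * v q) = 0"
      if p: "p \<in> grid_idx N" for p
      using Ksum[OF G_summable K_rkhs N_even N0 grid_pt_torus[OF p], of l] RcS R0 unfolding v_def by simp
    have re: "\<forall>p\<in>grid_idx N. (\<Sum>q\<in>grid_idx N. K (grid_pt N p) (grid_pt N q) * Re (v q)) = 0"
    proof
      fix p :: "nat^'n" assume p: "p \<in> grid_idx N"
      have "Re (\<Sum>q\<in>grid_idx N. complex_of_real (K (grid_pt N p) (grid_pt N q)) * v q) = 0"
        using Kv[OF p] by simp
      then show "(\<Sum>q\<in>grid_idx N. K (grid_pt N p) (grid_pt N q) * Re (v q)) = 0" by simp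
    qed
    have im: "\<forall>p\<in>grid_idx N. (\<Sum>q\<in>grid_idx N. K (grid_pt N p) (grid_pt N q) * Im (v q)) = 0"
    proof
      fix p :: "nat^'n" assume p: "p \<in> grid_idx N"
      have "Im (\<Sum>q\<in>grid_idx N. complex_of_real (K (grid_pt N p) (grid_pt N q)) * v q) = 0"
        using Kv[OF p] by simp
      then show "(\<Sum>q\<in>grid_idx N. K (grid_pt N p) (grid_pt N q) * Im (v q)) = 0" by simp
    qed
    have q0: "(0::nat^'n) \<in> grid_idx N" using N0 by (simp add: grid_idx_def)
    have invc: "(\<forall>p\<in>grid_idx N. (\<Sum>q\<in>grid_idx N. K (grid_pt N p) (grid_pt N q) * cc q) = 0) \<longrightarrow> (\<forall>q\<in>grid_idx N. cc q = 0)" for cc :: "nat^'n \<Rightarrow> real"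
      using inv unfolding grid_kernel_matrix_invertible_def by blast
    have "\<forall>q\<in>grid_idx N. Re (v q) = 0" using invc[of "\<lambda>q. Re (v q)"] re by simp
    then have "Re (v 0) = 0" using q0 by blast
    moreover have "\<forall>q\<in>grid_idx N. Im (v q) = 0" using invc[of "\<lambda>q. Im (v q)"] im by simp
    then have "Im (v 0) = 0" using q0 by blast
    ultimately have "v 0 = 0" by (simp add: complex_eq_iff)
    then show False unfolding v_def by simp
  qed
  have ip1: "l2_inner (S j) (phi k) = (if congv N k j then G k else 0)" for j k
  proof -
    have "((\<lambda>m. Ga j m * l2_inner (phi (aliased N m j)) (phi k)) has_sum l2_inner (S j) (phi k)) UNIV"
      by (rule ser(3)) (rule continuous_on_phi)
    then have "l2_inner (S j) (phi k) = infsum (\<lambda>m. G (aliased N m j) * (if aliased N m j = k then 1 else 0)) UNIV"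
      unfolding l2_inner_phi Ga_def by (simp add: infsumI)
    also have "\<dots> = infsum (\<lambda>k'. if congv N k' j then G k' * (if k' = k then 1 else 0) else 0) UNIV"
      by (rule infsum_class[OF N0, symmetric])
    also have "\<dots> = (if congv N k j then G k else 0)" by (rule infsum_single_supp)
    finally show ?thesis .
  qed
  have congA: "congv N (aliased N m k) j \<longleftrightarrow> congv N k j" for m k j
    using congv_sym congv_aliased by metis
  have ip2: "((\<lambda>m. if congv N k j then Ga k m * cnj (Ga k m) else 0) has_sum l2_inner (S k) (S j)) UNIV" for k j
  proof -
    have h: "((\<lambda>m. Ga k m * l2_inner (phi (aliased N m k)) (S j)) has_sum l2_inner (S k) (S j)) UNIV"
      by (rule ser(3)) (rule ser(1))
    have "Ga k m * l2_inner (phi (aliased N m k)) (S j) = (if congv N k j then Ga k m * cnj (Ga k m) else 0)" for m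
      using l2_inner_cnj[of "phi (aliased N m k)" "S j"] ip1[of j "aliased N m k"] congA[of m k j]
      by (simp add: Ga_def)
    then show ?thesis using h by simp
  qed
  have cre: "complex_of_real (1 / sqrt L1) = complex_of_real c" by (simp add: c_def)
  have psil: "psi G N l = (\<lambda>x. complex_of_real c * S l x)"
    unfolding psi_eq c_def L1_def ..
  have orth: "\<forall>k. (\<forall>i. 0 \<le> k $ i \<and> k $ i < int N) \<longrightarrow> k \<noteq> l \<longrightarrow> l2_inner (psi G N l) (psi G N k) = 0"
  proof (intro allI impI)
    fix k :: "int^'n" assume k: "\<forall>i. 0 \<le> k $ i \<and> k $ i < int N" and kl: "k \<noteq> l"
    have "\<not> congv N l k" using congv_small[OF _ l k] kl by blast
    then have "((\<lambda>m::int^'n. 0) has_sum l2_inner (S l) (S k)) UNIV" using ip2[of l k] by simp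
    then have "l2_inner (S l) (S k) = 0" by (metis has_sum_0_simp has_sum_unique)
    then show "l2_inner (psi G N l) (psi G N k) = 0" unfolding psi_eq l2_inner_scale by simp
  qed
  have congrefl: "congv N l l" by (simp add: congv_def)
  define Y where "Y = l2_inner (S l) (S l)"
  have Ysum: "((\<lambda>m. complex_of_real ((cmod (Ga l m))\<^sup>2)) has_sum Y) UNIV"
  proof -
    have "(\<lambda>m. if congv N l l then Ga l m * cnj (Ga l m) else 0) = (\<lambda>m. complex_of_real ((cmod (Ga l m))\<^sup>2))"
      using congrefl complex_norm_square[symmetric] by (simp only: if_True fun_eq_iff) blast
    then show ?thesis using ip2[of l l] unfolding Y_def by simp
  qed
  have ReY: "((\<lambda>m. (cmod (Ga l m))\<^sup>2) has_sum Re Y) UNIV"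
    using has_sum_Re[OF Ysum] by simp
  have G2: "G_l2 G N l = sqrt (Re Y)"
    unfolding G_l2_def using infsumI[OF ReY] by (simp add: Ga_def)
  have c0: "c \<ge> 0" unfolding c_def using L1nn by simp
  have l2n: "l2_norm (psi G N l) = G_l2 G N l / sqrt (G_l1 G N l)"
  proof -
    have "l2_inner (psi G N l) (psi G N l) = complex_of_real (c * c) * Y"
      unfolding psil l2_inner_scale Y_def by simp
    then have "Re (l2_inner (psi G N l) (psi G N l)) = c\<^sup>2 * Re Y" by (simp add: power2_eq_square)
    then have "l2_norm (psi G N l) = c * sqrt (Re Y)"
      unfolding l2_norm_def using c0 by (simp add: real_sqrt_mult)
    then show ?thesis unfolding G2 c_def L1_def by simp
  qed
  have rk: "rkhs_norm G (psi G N l) = 1"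
  proof -
    have trm: "(cmod (l2_inner (psi G N l) (phi k)))\<^sup>2 / Re (G k) = (if congv N k l then c\<^sup>2 * cmod (G k) else 0)" for k
    proof -
      have "l2_inner (psi G N l) (phi k) = l2_inner (\<lambda>x. complex_of_real c * S l x) (\<lambda>x. 1 * phi k x)"
        unfolding psil by simp
      also have "\<dots> = complex_of_real c * (if congv N k l then G k else 0)"
        unfolding l2_inner_scale ip1 by simp
      finally have e: "l2_inner (psi G N l) (phi k) = complex_of_real c * (if congv N k l then G k else 0)" .
      show ?thesis
      proof (cases "congv N k l")
        case True
        have "(cmod (complex_of_real c * G k))\<^sup>2 / Re (G k) = c\<^sup>2 * cmod (G k)"
        proof (cases "Re (G k) = 0")
          case True then show ?thesis using cmodRe[of k] by simp
        next
          case False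
          then show ?thesis unfolding norm_mult cmodRe using c0 by (simp add: power2_eq_square)
        qed
        then show ?thesis using True e by simp
      next
        case False then show ?thesis using e by simp
      qed
    qed
    have "(\<Sum>\<^sub>\<infinity>k. (cmod (l2_inner (psi G N l) (phi k)))\<^sup>2 / Re (G k))
        = infsum (\<lambda>k. if congv N k l then c\<^sup>2 * cmod (G k) else 0) UNIV"
      unfolding trm ..
    also have "\<dots> = infsum (\<lambda>m. c\<^sup>2 * cmod (G (aliased N m l))) UNIV"
      by (rule infsum_class[OF N0])
    also have "\<dots> = c\<^sup>2 * L1"
      using infsumI[OF L1sum] by (simp add: infsum_cmult_right' Ga_def)
    also have "\<dots> = 1" unfolding c_def using L1pos by (simp add: power_divide)
    finally show ?thesis unfolding rkhs_norm_def by simp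
  qed
  have eig: "\<forall>x\<in>torus. T_op K N (psi G N l) x = complex_of_real (G_l1 G N l) * psi G N l x"
  proof
    fix x :: "real^'n" assume x: "x \<in> torus"
    let ?P = "grid_idx N :: (nat^'n) set"
    let ?Nn = "of_nat N ^ CARD('n) :: complex"
    define W where "W p m = Ga l m * (complex_of_real (K x (grid_pt N p)) * phi (aliased N m l) (grid_pt N p))" for p m
    have sW: "W p summable_on UNIV" for p
      unfolding W_def by (rule summable_bounded_mult[OF Gas, of _ "\<bar>K x (grid_pt N p)\<bar>"]) (simp add: norm_mult)
    have "(\<Sum>p\<in>?P. complex_of_real (K x (grid_pt N p)) * S l (grid_pt N p)) = (\<Sum>p\<in>?P. infsum (W p) UNIV)"
    proof (rule sum.cong[OF refl])
      fix p
      show "complex_of_real (K x (grid_pt N p)) * S l (grid_pt N p) = infsum (W p) UNIV"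
        unfolding S_def W_def infsum_cmult_right'[symmetric] by (simp add: mult.left_commute)
    qed
    also have "\<dots> = infsum (\<lambda>m. \<Sum>p\<in>?P. W p m) UNIV"
    proof -
      have "((\<lambda>m. \<Sum>p\<in>?P. W p m) has_sum (\<Sum>p\<in>?P. infsum (W p) UNIV)) UNIV"
        by (rule has_sum_finite_sum[OF grid_finite sW])
      from sym[OF infsumI[OF this]] show ?thesis .
    qed
    also have "\<dots> = infsum (\<lambda>m. Ga l m * (?Nn * S l x)) UNIV"
    proof (rule infsum_cong)
      fix m
      have "(\<Sum>p\<in>?P. W p m) = Ga l m * (\<Sum>p\<in>?P. complex_of_real (K x (grid_pt N p)) * phi (aliased N m l) (grid_pt N p))"
        unfolding W_def sum_distrib_left ..
      also have "\<dots> = Ga l m * (?Nn * Rc G N (aliased N m l) x)"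
        unfolding Ksum[OF G_summable K_rkhs N_even N0 x] ..
      finally show "(\<Sum>p\<in>?P. W p m) = Ga l m * (?Nn * S l x)" unfolding Rc_alias RcS .
    qed
    also have "\<dots> = infsum (Ga l) UNIV * (?Nn * S l x)" by (rule infsum_cmult_left')
    finally have main: "(\<Sum>p\<in>?P. complex_of_real (K x (grid_pt N p)) * S l (grid_pt N p))
        = complex_of_real L1 * (?Nn * S l x)" unfolding L1c .
    have NN: "?Nn \<noteq> 0" using N0 by simp
    have "T_op K N (psi G N l) x = complex_of_real (1 / real N ^ CARD('n)) *
        (complex_of_real c * (\<Sum>p\<in>?P. complex_of_real (K x (grid_pt N p)) * S l (grid_pt N p)))"
      unfolding T_op_def psil by (simp add: sum_distrib_left mult.left_commute)
    also have "\<dots> = complex_of_real L1 * (complex_of_real c * S l x)"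
      unfolding main using NN by (simp add: field_simps)
    finally show "T_op K N (psi G N l) x = complex_of_real (G_l1 G N l) * psi G N l x"
      unfolding psil L1_def by simp
  qed
  show ?thesis using eig rk l2n orth by blast
qed


theorem lemma13:
  fixes g :: "real^'n \<Rightarrow> real" and M :: "real^'n^'n" and N :: nat and l :: "int^'n"
  defines "K \<equiv> kern g M" and "G \<equiv> fcoef g M"
  assumes pd: "pd_kernel torus K"
    and G_nonneg: "\<forall>k. Im (G k) = 0 \<and> 0 \<le> Re (G k)"
    and G_summable: "G summable_on UNIV"
    and K_rkhs: "\<forall>x\<in>torus. \<forall>x'\<in>torus.
        complex_of_real (K x x') = (\<Sum>\<^sub>\<infinity>k. G k * phi k x * cnj (phi k x'))"
    and N_even: "even N"
    and inv: "grid_kernel_matrix_invertible K N"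
    and l: "\<forall>i. 0 \<le> l $ i \<and> l $ i < int N"
  shows "(\<forall>x\<in>torus. T_op K N (psi G N l) x = complex_of_real (G_l1 G N l) * psi G N l x)
       \<and> rkhs_norm G (psi G N l) = 1
       \<and> l2_norm (psi G N l) = G_l2 G N l / sqrt (G_l1 G N l)
       \<and> (\<forall>k. (\<forall>i. 0 \<le> k $ i \<and> k $ i < int N) \<longrightarrow> k \<noteq> l \<longrightarrow>
             l2_inner (psi G N l) (psi G N k) = 0)"
    using main13[OF G_nonneg G_summable K_rkhs N_even inv l] .

end
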